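(* Consider the following game with parameters $N\ge 1$, integer $b\ge 1$ and $k>0$: initially there are $N$ empty bins; in each round Player I first removes a bin of largest size (number of balls) among the remaining bins, and then Player II adds at most $b$ balls in total to the remaining bins. Suppose that at some time $t_1$ some remaining bin $B_1$ contains at least $k$ balls. Let $B_2,B_3,\dots,B_r$ be the bins removed by Player I before time $t_1$, listed in reverse order of removal, with $B_i$ removed at time $t_i$ (so $t_1>t_2>t_3>\dots$). Then for every $i\ge 1$, at time $t_i$ (sizes taken just before Player I's removal at that time, for $i\ge 2$) we have $$|B_i|\ \ge\ k-\sum_{\ell=1}^{i-1}\frac{b}{\ell}\qquad\text{and}\qquad \sum_{\ell=1}^{i}|B_\ell|\ \ge\ i\cdot\Big(k-\sum_{\ell=1}^{i-1}\frac{b}{\ell}\Big),$$ where $|B|$ denotes the number of balls in bin $B$.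
   Context: Between two consecutive removals by Player I, Player II adds at most $b$ balls in total. *)

theory Defs
  imports Complex_Main
begin

text \<open>Round t (t < N): Player I removes bin rem t, then Player II
adds balls. load t j is the number of balls in bin j at time t, i.e. just before
Player I's removal in round t (time 0 = initial configuration).\<close>

definition alive :: "nat \<Rightarrow> (nat \<Rightarrow> nat) \<Rightarrow> nat \<Rightarrow> nat set" where
  "alive N rem t = {0..<N} - rem ` {..<t}"

definition valid_play :: "nat \<Rightarrow> nat \<Rightarrow> (nat \<Rightarrow> nat) \<Rightarrow> (nat \<Rightarrow> nat \<Rightarrow> nat) \<Rightarrow> bool" where
  "valid_play N b rem load \<longleftrightarrow>
     (\<forall>j. load 0 j = 0) \<and>
     (\<forall>t<N. rem t \<in> alive N rem t \<and> (\<forall>j\<in>alive N rem t. load t j \<le> load t (rem t))) \<and>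
     (\<forall>t<N. \<forall>j. load t j \<le> load (Suc t) j) \<and>
     (\<forall>t<N. \<forall>j. j \<notin> alive N rem (Suc t) \<longrightarrow> load (Suc t) j = load t j) \<and>
     (\<forall>t<N. (\<Sum>j\<in>alive N rem (Suc t). load (Suc t) j - load t j) \<le> b)"

text \<open>B_1 = B1, and B_i (i \<ge> 2) is the bin removed in round t1 + 1 - i,
i.e. the bins removed before time t1 in reverse order; B_i is removed at time t1 + 1 - i.\<close>

definition rev_bin :: "nat \<Rightarrow> nat \<Rightarrow> (nat \<Rightarrow> nat) \<Rightarrow> nat \<Rightarrow> nat" where
  "rev_bin t1 B1 rem i = (if i = 1 then B1 else rem (t1 + 1 - i))"

end

theory Submission
  imports Defs
begin

lemma alive_anti: "s \<le> t \<Longrightarrow> alive N rem t \<subseteq> alive N rem s"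
  unfolding alive_def by auto

theorem claimB1:
  fixes N b t1 B1 :: nat and k :: real
    and rem :: "nat \<Rightarrow> nat" and load :: "nat \<Rightarrow> nat \<Rightarrow> nat"
  assumes "N \<ge> 1" and "b \<ge> 1" and "k > 0"
    and "valid_play N b rem load"
    and "t1 \<le> N" and "B1 \<in> alive N rem t1" and "real (load t1 B1) \<ge> k"
  shows "\<forall>i. 1 \<le> i \<and> i \<le> t1 + 1 \<longrightarrow>
           real (load (t1 + 1 - i) (rev_bin t1 B1 rem i)) \<ge> k - (\<Sum>l=1..i-1. real b / real l)
         \<and> (\<Sum>l=1..i. real (load (t1 + 1 - i) (rev_bin t1 B1 rem l)))
             \<ge> real i * (k - (\<Sum>l=1..i-1. real b / real l))"
proof -
  define B where "B = rev_bin t1 B1 rem"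
  define K where "K = (\<lambda>i::nat. k - (\<Sum>l=1..i-1. real b / real l))"
  note vp = assms(4)[unfolded valid_play_def]
  have remA: "\<And>t. t < N \<Longrightarrow> rem t \<in> alive N rem t" using vp by blast
  have remM: "\<And>t j. t < N \<Longrightarrow> j \<in> alive N rem t \<Longrightarrow> load t j \<le> load t (rem t)" using vp by blast
  have mono: "\<And>t j. t < N \<Longrightarrow> load t j \<le> load (Suc t) j" using vp by blast
  have incr: "\<And>t. t < N \<Longrightarrow> (\<Sum>j\<in>alive N rem (Suc t). load (Suc t) j - load t j) \<le> b" using vp by blast
  have Balive: "B l \<in> alive N rem (t1 + 1 - l)" if "1 \<le> l" "l \<le> t1 + 1" for l
  proof (cases "l = 1")
    case True then show ?thesis using assms(6) by (simp add: B_def rev_bin_def)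
  next
    case False
    then have "t1 + 1 - l < N" using that assms(5) by linarith
    then show ?thesis using remA False by (simp add: B_def rev_bin_def)
  qed
  have Balive2: "B l \<in> alive N rem s" if "1 \<le> l" "l \<le> t1 + 1" "s \<le> t1 + 1 - l" for l s
    using Balive[OF that(1,2)] alive_anti[OF that(3)] by blast
  have Binj: "inj_on B {1..i}" if "i \<le> t1 + 1" for i
  proof (rule inj_onI)
    fix x y assume x: "x \<in> {1..i}" and y: "y \<in> {1..i}" and e: "B x = B y"
    show "x = y"
    proof (rule ccontr)
      assume "x \<noteq> y"
      then consider "x < y" | "y < x" by linarith
      then show False
      proof cases
        case 1
        have a: "B x \<in> alive N rem (t1 + 1 - x)" using Balive x that by auto
        have "B y = rem (t1 + 1 - y)" using 1 x by (simp add: B_def rev_bin_def)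
        moreover have "t1 + 1 - y < t1 + 1 - x" using 1 y that by auto
        ultimately have "B y \<notin> alive N rem (t1 + 1 - x)" unfolding alive_def by auto
        then show False using a e by simp
      next
        case 2
        have a: "B y \<in> alive N rem (t1 + 1 - y)" using Balive y that by auto
        have "B x = rem (t1 + 1 - x)" using 2 y by (simp add: B_def rev_bin_def)
        moreover have "t1 + 1 - x < t1 + 1 - y" using 2 x that by auto
        ultimately have "B x \<notin> alive N rem (t1 + 1 - y)" unfolding alive_def by auto
        then show False using a e by simp
      qed
    qed
  qed
  have main: "Suc m \<le> t1 + 1 \<longrightarrow> real (load (t1 + 1 - Suc m) (B (Suc m))) \<ge> K (Suc m)
     \<and> (\<Sum>l=1..Suc m. real (load (t1 + 1 - Suc m) (B l))) \<ge> real (Suc m) * K (Suc m)" for m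
  proof (induction m)
    case 0
    then show ?case using assms(7) by (simp add: B_def rev_bin_def K_def)
  next
    case (Suc m)
    show ?case
    proof
      assume le: "Suc (Suc m) \<le> t1 + 1"
      define i where "i = Suc m"
      define t where "t = t1 - i"
      have ti: "t1 + 1 - i = Suc t" "t1 + 1 - Suc i = t" using le by (auto simp: i_def t_def)
      have tN: "t < N" using assms(5) le by (simp add: t_def i_def)
      have IH1: "real (load (Suc t) (B i)) \<ge> K i"
        and IH2: "(\<Sum>l=1..i. real (load (Suc t) (B l))) \<ge> real i * K i"
        using Suc le ti by (auto simp: i_def)
      have al: "B l \<in> alive N rem (Suc t)" if "l \<in> {1..i}" for l
        using Balive2[of l "Suc t"] that le ti by (auto simp: i_def)
      have img: "B ` {1..i} \<subseteq> alive N rem (Suc t)" using al by auto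
      have fin: "finite (alive N rem (Suc t))" unfolding alive_def by auto
      have d1: "(\<Sum>l=1..i. load (Suc t) (B l) - load t (B l)) \<le> b"
      proof -
        have "(\<Sum>l=1..i. load (Suc t) (B l) - load t (B l))
            = (\<Sum>j\<in>B ` {1..i}. load (Suc t) j - load t j)"
          using sum.reindex[OF Binj, of i "\<lambda>j. load (Suc t) j - load t j"] le
          by (simp add: i_def)
        also have "\<dots> \<le> (\<Sum>j\<in>alive N rem (Suc t). load (Suc t) j - load t j)"
          by (rule sum_mono2[OF fin img]) simp
        also have "\<dots> \<le> b" using incr tN by blast
        finally show ?thesis .
      qed
      have d2: "(\<Sum>l=1..i. load (Suc t) (B l)) \<le> (\<Sum>l=1..i. load t (B l)) + b"
      proof -
        have "(\<Sum>l=1..i. load (Suc t) (B l)) = (\<Sum>l=1..i. (load (Suc t) (B l) - load t (B l)) + load t (B l))"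
          using mono[OF tN] by (intro sum.cong) (auto simp: le_add_diff_inverse2)
        also have "\<dots> = (\<Sum>l=1..i. load (Suc t) (B l) - load t (B l)) + (\<Sum>l=1..i. load t (B l))"
          by (simp add: sum.distrib)
        finally show ?thesis using d1 by linarith
      qed
      have BSi: "B (Suc i) = rem t" using ti by (simp add: B_def rev_bin_def i_def)
      have avg: "(\<Sum>l=1..i. load t (B l)) \<le> i * load t (B (Suc i))"
      proof -
        have "(\<Sum>l=1..i. load t (B l)) \<le> (\<Sum>l=1..i. load t (rem t))"
          apply (rule sum_mono)
          apply (rule remM[OF tN])
          using al alive_anti[of t "Suc t"] by auto
        then show ?thesis using BSi by simp
      qed
      define A where "A = (\<Sum>l=1..i. real (load t (B l)))"
      define x where "x = real (load t (B (Suc i)))"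
      have A1: "A \<ge> real i * K i - real b"
      proof -
        have "real (\<Sum>l=1..i. load (Suc t) (B l)) \<le> real (\<Sum>l=1..i. load t (B l)) + real b"
          using d2 by (metis of_nat_add of_nat_le_iff)
        then show ?thesis using IH2 unfolding A_def by (simp add: of_nat_sum)
      qed
      have A2: "A \<le> real i * x"
      proof -
        have "real (\<Sum>l=1..i. load t (B l)) \<le> real (i * load t (B (Suc i)))"
          using avg by (metis of_nat_le_iff)
        then show ?thesis unfolding A_def x_def by (simp add: of_nat_sum)
      qed
      have ipos: "real i > 0" by (simp add: i_def)
      have KS: "K (Suc i) = K i - real b / real i"
        unfolding K_def by (simp add: i_def)
      have X: "x \<ge> K (Suc i)"
      proof -
        have "real i * x \<ge> real i * K i - real b" using A1 A2 by linarith
        then have "x \<ge> (real i * K i - real b) / real i" using ipos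
          by (simp add: divide_le_eq mult.commute)
        also have "(real i * K i - real b) / real i = K i - real b / real i"
          using ipos by (simp add: field_simps)
        finally show ?thesis using KS by simp
      qed
      have S: "(\<Sum>l=1..Suc i. real (load t (B l))) = A + x"
        unfolding A_def x_def by simp
      have "A + x \<ge> real (Suc i) * K (Suc i)"
      proof -
        have "real i * K (Suc i) = real i * K i - real b"
          using KS ipos by (simp add: right_diff_distrib)
        then have "A \<ge> real i * K (Suc i)"
          using A1 by linarith
        then show ?thesis using X by (simp add: algebra_simps)
      qed
      then show "real (load (t1 + 1 - Suc (Suc m)) (B (Suc (Suc m)))) \<ge> K (Suc (Suc m))
     \<and> (\<Sum>l=1..Suc (Suc m). real (load (t1 + 1 - Suc (Suc m)) (B l))) \<ge> real (Suc (Suc m)) * K (Suc (Suc m))"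
        using X S ti by (simp add: i_def x_def)
    qed
  qed
  show ?thesis
  proof (intro allI impI)
    fix i assume h: "1 \<le> i \<and> i \<le> t1 + 1"
    then obtain m where "i = Suc m" by (cases i) auto
    then show "real (load (t1 + 1 - i) (rev_bin t1 B1 rem i)) \<ge> k - (\<Sum>l=1..i-1. real b / real l)
         \<and> (\<Sum>l=1..i. real (load (t1 + 1 - i) (rev_bin t1 B1 rem l)))
             \<ge> real i * (k - (\<Sum>l=1..i-1. real b / real l))"
      using main[of m] h by (simp add: B_def K_def)
  qed
qed

end
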